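(* Let $B$ be a connected building set on $V=[n]$ and let $\emptyset=I_0\subsetneq I_1\subsetneq\cdots\subsetneq I_k=V$ be a splitting chain of $B$. For $i\in V$ let $l(i)$ be the unique $j$ with $i\in I_j\setminus I_{j-1}$, and let $S_i$ be the largest (by inclusion) element of $B$ containing $i$ and contained in $I_{l(i)-1}\cup\{i\}$. Then $S_i=V$ for exactly one $i\in V$, the sets $S_i$ ($i\in V$) are pairwise distinct, and $N=\{S_i: i\in V\}\setminus\{V\}$ is a maximal (with respect to inclusion) nested set of $B$.
   Context: A building set on a finite set $V$ is a collection $B$ of nonempty subsets of $V$ such that $\{v\}\in B$ for all $v\in V$ and such that $I,J\in B$, $I\cap J\neq\emptyset$ imply $I\cup J\in B$. It is connected if $V\in B$, and discrete if it consists only of the singletons. For $I\subseteq V$, the restriction is $B|_I=\{J\in B: J\subseteq I\}$ and the contraction is $B/I=\{J\subseteq V\setminus I: J\neq\emptyset,\ J\in B\text{ or }J\cup I'\in B\text{ for some }I'\subseteq I\}$. A splitting chain of $B$ is a chain $\emptyset=I_0\subsetneq I_1\subsetneq\cdots\subsetneq I_k=V$ such that for every $1\le j\le k$ the building set $(B|_{I_j})/I_{j-1}$ on $I_j\setminus I_{j-1}$ is discrete. For a connected building set $B$ on $V$, a nested set is a subcollection $N\subseteq B\setminus\{V\}$ such that (N1) any two members of $N$ are either comparable by inclusion or disjoint, and (N2) the union of any $p\ge2$ pairwise disjoint members of $N$ does not belong to $B$. (Since $B$ is closed under unions of intersecting members, the largest element $S_i$ above exists.) *)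

theory Defs
  imports Main
begin

definition building_set :: "'a set \<Rightarrow> 'a set set \<Rightarrow> bool" where
  "building_set V B \<longleftrightarrow>
     (\<forall>J\<in>B. J \<noteq> {} \<and> J \<subseteq> V) \<and>
     (\<forall>v\<in>V. {v} \<in> B) \<and>
     (\<forall>I\<in>B. \<forall>J\<in>B. I \<inter> J \<noteq> {} \<longrightarrow> I \<union> J \<in> B)"

definition connected_bs :: "'a set \<Rightarrow> 'a set set \<Rightarrow> bool" where
  "connected_bs V B \<longleftrightarrow> building_set V B \<and> V \<in> B"

definition discrete_bs :: "'a set \<Rightarrow> 'a set set \<Rightarrow> bool" where
  "discrete_bs V B \<longleftrightarrow> B = (\<lambda>v. {v}) ` V"

definition restrict_bs :: "'a set set \<Rightarrow> 'a set \<Rightarrow> 'a set set" where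
  "restrict_bs B I = {J \<in> B. J \<subseteq> I}"

definition contract_bs :: "'a set \<Rightarrow> 'a set set \<Rightarrow> 'a set \<Rightarrow> 'a set set" where
  "contract_bs V B I = {J. J \<subseteq> V - I \<and> J \<noteq> {} \<and>
      (J \<in> B \<or> (\<exists>I'. I' \<subseteq> I \<and> J \<union> I' \<in> B))}"

definition splitting_chain :: "'a set \<Rightarrow> 'a set set \<Rightarrow> nat \<Rightarrow> (nat \<Rightarrow> 'a set) \<Rightarrow> bool" where
  "splitting_chain V B k I \<longleftrightarrow>
     I 0 = {} \<and> I k = V \<and> (\<forall>j. 1 \<le> j \<and> j \<le> k \<longrightarrow> I (j - 1) \<subset> I j) \<and>
     (\<forall>j. 1 \<le> j \<and> j \<le> k \<longrightarrow>
        discrete_bs (I j - I (j - 1)) (contract_bs (I j) (restrict_bs B (I j)) (I (j - 1))))"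

definition chain_level :: "nat \<Rightarrow> (nat \<Rightarrow> 'a set) \<Rightarrow> 'a \<Rightarrow> nat" where
  "chain_level k I i = (THE j. 1 \<le> j \<and> j \<le> k \<and> i \<in> I j - I (j - 1))"

definition chain_S :: "'a set set \<Rightarrow> nat \<Rightarrow> (nat \<Rightarrow> 'a set) \<Rightarrow> 'a \<Rightarrow> 'a set" where
  "chain_S B k I i = (THE S. S \<in> B \<and> i \<in> S \<and> S \<subseteq> I (chain_level k I i - 1) \<union> {i} \<and>
      (\<forall>T\<in>B. i \<in> T \<and> T \<subseteq> I (chain_level k I i - 1) \<union> {i} \<longrightarrow> T \<subseteq> S))"

definition nested_set :: "'a set \<Rightarrow> 'a set set \<Rightarrow> 'a set set \<Rightarrow> bool" where
  "nested_set V B N \<longleftrightarrow>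
     N \<subseteq> B - {V} \<and>
     (\<forall>X\<in>N. \<forall>Y\<in>N. X \<subseteq> Y \<or> Y \<subseteq> X \<or> X \<inter> Y = {}) \<and>
     (\<forall>F. F \<subseteq> N \<longrightarrow> 2 \<le> card F \<longrightarrow> pairwise disjnt F \<longrightarrow> \<Union>F \<notin> B)"

definition maximal_nested_set :: "'a set \<Rightarrow> 'a set set \<Rightarrow> 'a set set \<Rightarrow> bool" where
  "maximal_nested_set V B N \<longleftrightarrow>
     nested_set V B N \<and> (\<forall>N'. nested_set V B N' \<longrightarrow> N \<subseteq> N' \<longrightarrow> N' = N)"

end

theory Submission
  imports Defs
begin

locale SC =
  fixes V :: "'a set" and B :: "'a set set" and k :: nat and I :: "nat \<Rightarrow> 'a set"
  assumes fin: "finite V" and bs: "building_set V B" and VB: "V \<in> B"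
    and sc: "splitting_chain V B k I"
begin

abbreviation lv where "lv \<equiv> chain_level k I"
abbreviation Sc where "Sc \<equiv> chain_S B k I"

lemma B_sub: "T \<in> B \<Longrightarrow> T \<subseteq> V" and B_ne: "T \<in> B \<Longrightarrow> T \<noteq> {}"
  and B_single: "v \<in> V \<Longrightarrow> {v} \<in> B"
  and B_un: "X \<in> B \<Longrightarrow> Y \<in> B \<Longrightarrow> X \<inter> Y \<noteq> {} \<Longrightarrow> X \<union> Y \<in> B"
  using bs unfolding building_set_def by auto

lemma I0: "I 0 = {}" and Ik: "I k = V" and Istep: "1 \<le> j \<Longrightarrow> j \<le> k \<Longrightarrow> I (j-1) \<subset> I j"
  and disc: "1 \<le> j \<Longrightarrow> j \<le> k \<Longrightarrow> discrete_bs (I j - I (j-1)) (contract_bs (I j) (restrict_bs B (I j)) (I (j-1)))"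
  using sc unfolding splitting_chain_def by auto

lemma I_mono: "j \<le> j' \<Longrightarrow> j' \<le> k \<Longrightarrow> I j \<subseteq> I j'"
proof (induction j')
  case 0 then show ?case by simp
next
  case (Suc j')
  show ?case
  proof (cases "j \<le> j'")
    case True
    with Suc have "I j \<subseteq> I j'" by simp
    moreover have "I j' \<subset> I (Suc j')" using Istep[of "Suc j'"] Suc.prems by simp
    ultimately show ?thesis by blast
  next
    case False with Suc.prems have "j = Suc j'" by simp
    then show ?thesis by simp
  qed
qed

lemma I_V: "j \<le> k \<Longrightarrow> I j \<subseteq> V" using I_mono[of j k] Ik by simp

lemma level_ex: assumes "i \<in> V" shows "\<exists>j. 1 \<le> j \<and> j \<le> k \<and> i \<in> I j \<and> i \<notin> I (j-1)"
proof -
  have ik: "i \<in> I k" using Ik assms by simp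
  define j where "j = (LEAST j. i \<in> I j)"
  have ij: "i \<in> I j" unfolding j_def by (rule LeastI) (rule ik)
  have jk: "j \<le> k" unfolding j_def by (rule Least_le) (rule ik)
  have j0: "j \<noteq> 0" using ij I0 by (cases j) auto
  have "i \<notin> I (j-1)"
  proof
    assume "i \<in> I (j-1)"
    then have "j \<le> j - 1" unfolding j_def by (rule Least_le)
    with j0 show False by simp
  qed
  with ij jk j0 show ?thesis by (intro exI[of _ j]) auto
qed

lemma level_uniq:
  assumes "1 \<le> j" "j \<le> k" "i \<in> I j" "i \<notin> I (j-1)" "1 \<le> j'" "j' \<le> k" "i \<in> I j'" "i \<notin> I (j'-1)"
  shows "j = j'"
proof (rule ccontr)
  assume "j \<noteq> j'"
  then consider "j < j'" | "j' < j" by linarith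
  then show False
  proof cases
    case 1
    then have "I j \<subseteq> I (j'-1)" using I_mono[of j "j'-1"] assms by simp
    with assms show False by blast
  next
    case 2
    then have "I j' \<subseteq> I (j-1)" using I_mono[of j' "j-1"] assms by simp
    with assms show False by blast
  qed
qed

lemma lv: assumes "i \<in> V" shows "1 \<le> lv i \<and> lv i \<le> k \<and> i \<in> I (lv i) \<and> i \<notin> I (lv i - 1)"
proof -
  have "\<exists>!j. 1 \<le> j \<and> j \<le> k \<and> i \<in> I j - I (j - 1)"
    using level_ex[OF assms] level_uniq by blast
  from theI'[OF this] show ?thesis unfolding chain_level_def by simp
qed

lemma lv1: "i \<in> V \<Longrightarrow> 1 \<le> lv i" and lvk: "i \<in> V \<Longrightarrow> lv i \<le> k"
  and lvin: "i \<in> V \<Longrightarrow> i \<in> I (lv i)" and lvnotin: "i \<in> V \<Longrightarrow> i \<notin> I (lv i - 1)"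
  using lv by blast+

lemma lv_eq: "1 \<le> j \<Longrightarrow> j \<le> k \<Longrightarrow> i \<in> I j \<Longrightarrow> i \<notin> I (j-1) \<Longrightarrow> lv i = j"
  using lv[of i] level_uniq[of j i "lv i"] I_V[of j] by blast

lemma lv_le: assumes "i \<in> I j" "j \<le> k" shows "lv i \<le> j"
proof (rule ccontr)
  assume "\<not> lv i \<le> j"
  have iV: "i \<in> V" using assms I_V by blast
  have "j \<le> lv i - 1" "lv i - 1 \<le> k" using lv[OF iV] \<open>\<not> lv i \<le> j\<close> by auto
  then have "I j \<subseteq> I (lv i - 1)" by (rule I_mono)
  with assms lv[OF iV] show False by blast
qed

lemma key:
  assumes j: "1 \<le> j" "j \<le> k" and TB: "T \<in> B" and TI: "T \<subseteq> I j" and ab: "a \<in> T" "b \<in> T"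
    and na: "a \<notin> I (j-1)" and nb: "b \<notin> I (j-1)"
  shows "a = b"
proof -
  define J where "J = T - I (j-1)"
  have e: "J \<union> (T \<inter> I (j-1)) = T" unfolding J_def by blast
  have r: "J \<union> (T \<inter> I (j-1)) \<in> restrict_bs B (I j)"
    unfolding e restrict_bs_def using TB TI by simp
  have J1: "J \<subseteq> I j - I (j-1)" unfolding J_def using TI by blast
  have J2: "J \<noteq> {}" unfolding J_def using ab na by blast
  have J3: "T \<inter> I (j-1) \<subseteq> I (j-1)" by simp
  have "J \<in> contract_bs (I j) (restrict_bs B (I j)) (I (j-1))"
    unfolding contract_bs_def using J1 J2 J3 r by blast
  with disc[OF j] have "J \<in> (\<lambda>v. {v}) ` (I j - I (j-1))" unfolding discrete_bs_def by simp
  then obtain v where v: "J = {v}" by auto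
  have "a \<in> J" "b \<in> J" unfolding J_def using ab na nb by auto
  with v show "a = b" by simp
qed

lemma union_B: "finite F \<Longrightarrow> F \<noteq> {} \<Longrightarrow> F \<subseteq> B \<Longrightarrow> \<forall>X\<in>F. x \<in> X \<Longrightarrow> \<Union>F \<in> B"
proof (induction F rule: finite_ne_induct)
  case (singleton X) then show ?case by simp
next
  case (insert X F)
  then have "\<Union>F \<in> B" "X \<in> B" "x \<in> X \<inter> \<Union>F" by auto
  then have "X \<union> \<Union>F \<in> B" using B_un by blast
  then show ?case by simp
qed

lemma S_props: assumes "i \<in> V"
  shows "Sc i \<in> B \<and> i \<in> Sc i \<and> Sc i \<subseteq> I (lv i - 1) \<union> {i} \<and>
    (\<forall>T\<in>B. i \<in> T \<and> T \<subseteq> I (lv i - 1) \<union> {i} \<longrightarrow> T \<subseteq> Sc i)"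
proof -
  let ?F = "{T \<in> B. i \<in> T \<and> T \<subseteq> I (lv i - 1) \<union> {i}}"
  have f: "finite ?F" by (rule finite_subset[of _ "Pow V"]) (auto dest: B_sub simp: fin)
  have s: "{i} \<in> ?F" using B_single assms by auto
  have U: "\<Union>?F \<in> B" by (rule union_B[where x=i]) (use f s in auto)
  have "Sc i = \<Union>?F" unfolding chain_S_def
    by (rule the_equality) (use U s in auto)
  then show ?thesis using U s by auto
qed

lemma S_B: "i \<in> V \<Longrightarrow> Sc i \<in> B" and S_in: "i \<in> V \<Longrightarrow> i \<in> Sc i"
  and S_sub: "i \<in> V \<Longrightarrow> Sc i \<subseteq> I (lv i - 1) \<union> {i}"
  and S_max: "i \<in> V \<Longrightarrow> T \<in> B \<Longrightarrow> i \<in> T \<Longrightarrow> T \<subseteq> I (lv i - 1) \<union> {i} \<Longrightarrow> T \<subseteq> Sc i"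
  using S_props by blast+

lemma S_V: "i \<in> V \<Longrightarrow> Sc i \<subseteq> V" using S_B B_sub by blast

lemma S_I: assumes "i \<in> V" shows "Sc i \<subseteq> I (lv i)"
proof -
  have "I (lv i - 1) \<subseteq> I (lv i)" by (rule I_mono) (use lvk[OF assms] in linarith)+
  then show ?thesis using S_sub[OF assms] lv[OF assms] by blast
qed

lemma S_lower: assumes "i \<in> V" "j \<in> Sc i" "j \<noteq> i" shows "j \<in> I (lv i - 1) \<and> lv j < lv i"
proof -
  have j: "j \<in> I (lv i - 1)" using S_sub[OF assms(1)] assms by blast
  have "lv j \<le> lv i - 1" by (rule lv_le[OF j]) (use lvk[OF assms(1)] in linarith)
  moreover have "1 \<le> lv i" using lv1[OF assms(1)] .
  ultimately show ?thesis using j by linarith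
qed

lemma i_notin_lower: assumes "i \<in> V" "j \<in> V" "lv j < lv i" shows "i \<notin> Sc j"
proof
  assume "i \<in> Sc j"
  moreover have "I (lv j) \<subseteq> I (lv i - 1)" by (rule I_mono) (use lvk[OF assms(1)] assms(3) in linarith)+
  ultimately show False using S_I[OF assms(2)] lv[OF assms(1)] by blast
qed

lemma nest: assumes "i \<in> V" "j \<in> V" "lv i < lv j" "Sc i \<inter> Sc j \<noteq> {}" shows "Sc i \<subseteq> Sc j"
proof -
  have U: "Sc i \<union> Sc j \<in> B" using B_un S_B assms by blast
  have "I (lv i) \<subseteq> I (lv j - 1)" by (rule I_mono) (use lvk[OF assms(2)] assms(3) in linarith)+
  then have "Sc i \<union> Sc j \<subseteq> I (lv j - 1) \<union> {j}" using S_I[OF assms(1)] S_sub[OF assms(2)] by blast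
  then have "Sc i \<union> Sc j \<subseteq> Sc j" using S_max[OF assms(2) U] S_in[OF assms(2)] by blast
  then show ?thesis by blast
qed

lemma same: assumes "i \<in> V" "j \<in> V" "i \<noteq> j" "lv i = lv j" shows "Sc i \<inter> Sc j = {}"
proof (rule ccontr)
  assume "Sc i \<inter> Sc j \<noteq> {}"
  then have U: "Sc i \<union> Sc j \<in> B" using B_un S_B assms by blast
  have "Sc i \<union> Sc j \<subseteq> I (lv i)" using S_I[OF assms(1)] S_I[OF assms(2)] assms(4) by auto
  from key[OF _ _ U this, of i j] lv[OF assms(1)] lv[OF assms(2)] assms S_in show False by auto
qed

lemma nested_pair: assumes "i \<in> V" "j \<in> V" shows "Sc i \<subseteq> Sc j \<or> Sc j \<subseteq> Sc i \<or> Sc i \<inter> Sc j = {}"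
proof -
  consider "lv i < lv j" | "lv i = lv j" | "lv j < lv i" by linarith
  then show ?thesis
  proof cases
    case 1 then show ?thesis using nest assms by blast
  next
    case 2 then show ?thesis using same assms by (cases "i = j") auto
  next
    case 3 then show ?thesis using nest assms by blast
  qed
qed

lemma S_inj: assumes "i \<in> V" "j \<in> V" "Sc i = Sc j" shows "i = j"
proof (rule ccontr)
  assume ne: "i \<noteq> j"
  consider "lv i < lv j" | "lv i = lv j" | "lv j < lv i" by linarith
  then show False
  proof cases
    case 1
    have "j \<in> Sc i" using S_in[OF assms(2)] assms(3) by simp
    then show False using S_lower[OF assms(1) _] ne 1 by fastforce
  next
    case 2 then show False using same[OF assms(1,2) ne] assms S_in by auto
  next
    case 3
    have "i \<in> Sc j" using S_in[OF assms(1)] assms(3) by simp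
    then show False using S_lower[OF assms(2) _] ne 3 by fastforce
  qed
qed

lemma k_pos: "1 \<le> k"
proof (rule ccontr)
  assume "\<not> 1 \<le> k"
  then have "k = 0" by simp
  then have "V = {}" using I0 Ik by simp
  then show False using B_ne VB by simp
qed

lemma top: obtains i0 where "i0 \<in> V" "lv i0 = k" "\<And>v. v \<in> V \<Longrightarrow> v \<notin> I (k-1) \<Longrightarrow> v = i0"
proof -
  have "I (k-1) \<subset> I k" using Istep[of k] k_pos by simp
  then obtain i0 where i0: "i0 \<in> V" "i0 \<notin> I (k-1)" using Ik by blast
  have "lv i0 = k" by (rule lv_eq) (use k_pos i0 Ik in auto)
  moreover have "v = i0" if "v \<in> V" "v \<notin> I (k-1)" for v
    by (rule key[OF k_pos order_refl VB]) (use Ik that i0 in auto)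
  ultimately show ?thesis using that i0 by blast
qed

lemma N2: assumes F: "F \<subseteq> Sc ` V" "2 \<le> card F" "pairwise disjnt F" shows "\<Union>F \<notin> B"
proof
  assume UB: "\<Union>F \<in> B"
  have finF: "finite F" using F(2) card.infinite by force
  have "F \<noteq> {}" using F(2) by auto
  let ?A = "{i \<in> V. Sc i \<in> F}"
  have finL: "finite (lv ` ?A)" using fin by simp
  have neL: "lv ` ?A \<noteq> {}" using \<open>F \<noteq> {}\<close> F(1) by blast
  define m where "m = Max (lv ` ?A)"
  have "m \<in> lv ` ?A" unfolding m_def using finL neL by (rule Max_in)
  then obtain i where i: "i \<in> V" "Sc i \<in> F" "lv i = m" by blast
  have le: "lv j \<le> m" if "j \<in> V" "Sc j \<in> F" for j unfolding m_def using finL that by (intro Max_ge) auto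
  have mk: "1 \<le> m" "m \<le> k" using lv[OF i(1)] i by auto
  have sub_m: "Sc j \<subseteq> I m" if "j \<in> V" "Sc j \<in> F" for j
    using S_I[OF that(1)] I_mono[of "lv j" m] le[OF that] mk by blast
  have UI: "\<Union>F \<subseteq> I m" using F(1) sub_m by blast
  have lower: "lv j < m" if "j \<in> V" "Sc j \<in> F" "Sc j \<noteq> Sc i" for j
  proof (rule ccontr)
    assume "\<not> lv j < m"
    then have "lv j = m" using le[OF that(1,2)] by simp
    then have "i = j" using key[OF mk UB UI, of i j] lv[OF i(1)] lv[OF that(1)] i S_in that by auto
    then show False using that by simp
  qed
  have "\<Union>F \<subseteq> I (lv i - 1) \<union> {i}"
  proof
    fix x assume "x \<in> \<Union>F"
    then obtain j where j: "j \<in> V" "Sc j \<in> F" "x \<in> Sc j" using F(1) by blast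
    show "x \<in> I (lv i - 1) \<union> {i}"
    proof (cases "Sc j = Sc i")
      case True then show ?thesis using S_sub[OF i(1)] j by blast
    next
      case False
      then have "lv j \<le> m - 1" using lower[OF j(1,2)] by simp
      then have "I (lv j) \<subseteq> I (lv i - 1)" using I_mono[of "lv j" "m - 1"] mk i by simp
      then show ?thesis using S_I[OF j(1)] j by blast
    qed
  qed
  then have Usub: "\<Union>F \<subseteq> Sc i" using S_max[OF i(1) UB] S_in[OF i(1)] i by blast
  have "F - {Sc i} \<noteq> {}"
  proof
    assume "F - {Sc i} = {}"
    then have "F \<subseteq> {Sc i}" by blast
    then have "card F \<le> 1" using card_mono[of "{Sc i}" F] by simp
    then show False using F(2) by simp
  qed
  then obtain Y where Y: "Y \<in> F" "Y \<noteq> Sc i" by blast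
  then obtain j where j: "j \<in> V" "Y = Sc j" using F(1) by blast
  have "disjnt Y (Sc i)" using F(3) Y i(2) unfolding pairwise_def by blast
  moreover have "Y \<subseteq> Sc i" using Usub Y by blast
  moreover have "j \<in> Y" using j S_in by simp
  ultimately show False unfolding disjnt_def by blast
qed

definition "N = Sc ` V - {V}"

lemma nestedN: "nested_set V B N"
  unfolding nested_set_def N_def
proof (intro conjI allI impI)
  show "Sc ` V - {V} \<subseteq> B - {V}" using S_B by blast
  show "\<forall>X\<in>Sc ` V - {V}. \<forall>Y\<in>Sc ` V - {V}. X \<subseteq> Y \<or> Y \<subseteq> X \<or> X \<inter> Y = {}"
    using nested_pair by blast
  fix F assume "F \<subseteq> Sc ` V - {V}" "2 \<le> card F" "pairwise disjnt F"
  then show "\<Union>F \<notin> B" using N2[of F] by blast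
qed

lemma maxN: assumes N': "nested_set V B N'" "N \<subseteq> N'" and T: "T \<in> N'" shows "T \<in> N"
proof -
  have TB: "T \<in> B" "T \<noteq> V" using N' T unfolding nested_set_def by auto
  have pw: "\<And>X Y. X \<in> N' \<Longrightarrow> Y \<in> N' \<Longrightarrow> X \<subseteq> Y \<or> Y \<subseteq> X \<or> X \<inter> Y = {}"
    using N' unfolding nested_set_def by blast
  have n2: "\<And>F. F \<subseteq> N' \<Longrightarrow> 2 \<le> card F \<Longrightarrow> pairwise disjnt F \<Longrightarrow> \<Union>F \<notin> B"
    using N' unfolding nested_set_def by blast
  have TV: "T \<subseteq> V" "T \<noteq> {}" using TB B_sub B_ne by auto
  have finT: "finite T" using TV fin finite_subset by blast
  define m where "m = Max (lv ` T)"
  have "m \<in> lv ` T" unfolding m_def using finT TV by (intro Max_in) auto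
  then obtain i where i: "i \<in> T" "lv i = m" by blast
  have iV: "i \<in> V" using i TV by blast
  have mk: "1 \<le> m" "m \<le> k" using lv[OF iV] i by auto
  have TIm: "T \<subseteq> I m"
  proof
    fix t assume t: "t \<in> T"
    then have "t \<in> V" using TV by blast
    moreover have "lv t \<le> m" unfolding m_def using finT t by (intro Max_ge) auto
    ultimately show "t \<in> I m" using lv[of t] I_mono[of "lv t" m] mk by blast
  qed
  have "T \<subseteq> I (lv i - 1) \<union> {i}"
  proof
    fix t assume t: "t \<in> T"
    show "t \<in> I (lv i - 1) \<union> {i}"
    proof (cases "t \<in> I (m - 1)")
      case True then show ?thesis using i by simp
    next
      case False
      have "i \<notin> I (m-1)" using lv[OF iV] i by simp
      then have "t = i" using key[OF mk TB(1) TIm t i(1) False] by simp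
      then show ?thesis by simp
    qed
  qed
  then have TS: "T \<subseteq> Sc i" using S_max[OF iV TB(1) i(1)] by blast
  show "T \<in> N"
  proof (cases "T = Sc i")
    case True then show ?thesis using TB iV unfolding N_def by blast
  next
    case False
    define R where "R = Sc i - T"
    have Rne: "R \<noteq> {}" using TS False unfolding R_def by blast
    have RV: "R \<subseteq> V" using S_V[OF iV] unfolding R_def by blast
    have Rprops: "Sc j \<in> N \<and> Sc j \<subseteq> Sc i \<and> T \<inter> Sc j = {}" if j: "j \<in> R" for j
    proof -
      have jV: "j \<in> V" using j RV by blast
      have jS: "j \<in> Sc i" "j \<notin> T" "j \<noteq> i" using j i unfolding R_def by auto
      have lj: "lv j < lv i" using S_lower[OF iV jS(1) jS(3)] by simp
      have iSj: "i \<notin> Sc j" using i_notin_lower[OF iV jV lj] .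
      have "Sc j \<noteq> V" using iSj iV by blast
      then have SN: "Sc j \<in> N" unfolding N_def using jV by blast
      have "Sc j \<subseteq> Sc i" using nest[OF jV iV lj] S_in[OF jV] jS by blast
      moreover have "T \<inter> Sc j = {}"
        using pw[OF T, of "Sc j"] SN N'(2) iSj i(1) jS(2) S_in[OF jV] by blast
      ultimately show ?thesis using SN by blast
    qed
    define G where "G = Sc ` R"
    have finG: "finite G" unfolding G_def using RV fin finite_subset by blast
    define M where "M = {X \<in> G. \<forall>Y\<in>G. X \<subseteq> Y \<longrightarrow> X = Y}"
    have finM: "finite M" using finG unfolding M_def by simp
    have MG: "M \<subseteq> G" unfolding M_def by blast
    have hasmax: "\<exists>Z\<in>M. X \<subseteq> Z" if XG: "X \<in> G" for X
    proof -
      obtain Z where "Z \<in> G" "X \<le> Z" "\<forall>b\<in>G. Z \<le> b \<longrightarrow> Z = b"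
        using finite_has_maximal2[OF finG XG] by blast
      then show ?thesis unfolding M_def by blast
    qed
    let ?F = "insert T M"
    have FN: "?F \<subseteq> N'" using T MG Rprops N'(2) unfolding G_def by blast
    have pd: "pairwise disjnt ?F"
      unfolding pairwise_def disjnt_def
    proof (intro ballI impI)
      fix X Y assume X: "X \<in> ?F" and Y: "Y \<in> ?F" and XY: "X \<noteq> Y"
      show "X \<inter> Y = {}"
      proof (cases "X = T")
        case True
        then have "Y \<in> M" using Y XY by blast
        then show ?thesis using True Rprops MG unfolding G_def by blast
      next
        case XT: False
        show ?thesis
        proof (cases "Y = T")
          case True
          then have "X \<in> M" using X XY by blast
          then show ?thesis using True Rprops MG unfolding G_def by blast
        next
          case False
          then have XM: "X \<in> M" and YM: "Y \<in> M" using X Y XT by auto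
          have "X \<in> N'" "Y \<in> N'" using XM YM FN by auto
          then have "X \<subseteq> Y \<or> Y \<subseteq> X \<or> X \<inter> Y = {}" using pw by blast
          moreover have "\<not> X \<subseteq> Y" using XM YM XY MG unfolding M_def by blast
          moreover have "\<not> Y \<subseteq> X" using XM YM XY MG unfolding M_def by blast
          ultimately show ?thesis by blast
        qed
      qed
    qed
    have UF: "\<Union>?F = Sc i"
    proof
      show "\<Union>?F \<subseteq> Sc i" using TS MG Rprops unfolding G_def by blast
      show "Sc i \<subseteq> \<Union>?F"
      proof
        fix x assume x: "x \<in> Sc i"
        show "x \<in> \<Union>?F"
        proof (cases "x \<in> T")
          case True then show ?thesis by blast
        next
          case False
          then have xR: "x \<in> R" using x unfolding R_def by blast
          then have "Sc x \<in> G" unfolding G_def by blast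
          then obtain Z where "Z \<in> M" "Sc x \<subseteq> Z" using hasmax by blast
          moreover have "x \<in> Sc x" using S_in xR RV by blast
          ultimately show ?thesis by blast
        qed
      qed
    qed
    obtain x where "x \<in> R" using Rne by blast
    then have "Sc x \<in> G" unfolding G_def by blast
    then obtain Z where ZM: "Z \<in> M" using hasmax by blast
    have "T \<notin> M"
    proof
      assume "T \<in> M"
      then obtain j where "j \<in> R" "T = Sc j" using MG unfolding G_def by blast
      then show False using Rprops[of j] TV by blast
    qed
    then have "card ?F = Suc (card M)" using finM by simp
    moreover have "card M \<ge> 1" using ZM finM by (metis One_nat_def Suc_leI card_gt_0_iff empty_iff)
    ultimately have "2 \<le> card ?F" by simp
    then have "\<Union>?F \<notin> B" using n2[OF FN _ pd] by blast
    then show ?thesis using UF S_B[OF iV] by simp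
  qed
qed

lemma result:
  "(\<exists>!i. i \<in> V \<and> Sc i = V) \<and> inj_on Sc V \<and> maximal_nested_set V B (Sc ` V - {V})"
proof (intro conjI)
  obtain i0 where i0: "i0 \<in> V" "lv i0 = k" "\<And>v. v \<in> V \<Longrightarrow> v \<notin> I (k-1) \<Longrightarrow> v = i0"
    using top by blast
  have Vsub: "V \<subseteq> I (lv i0 - 1) \<union> {i0}"
  proof
    fix v assume v: "v \<in> V"
    show "v \<in> I (lv i0 - 1) \<union> {i0}"
    proof (cases "v \<in> I (k-1)")
      case True then show ?thesis using i0(2) by simp
    next
      case False then show ?thesis using i0(3)[OF v] by simp
    qed
  qed
  have "V \<subseteq> Sc i0" by (rule S_max[OF i0(1) VB i0(1) Vsub])
  then have Si0: "Sc i0 = V" using S_V[OF i0(1)] by blast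
  have ne: "Sc i \<noteq> V" if "i \<in> V" "i \<noteq> i0" for i
  proof
    assume "Sc i = V"
    then have "i0 \<in> Sc i" using i0 by blast
    then have "lv i0 < lv i" using S_lower[OF that(1)] that by blast
    then show False using lv[OF that(1)] i0 by simp
  qed
  show "\<exists>!i. i \<in> V \<and> Sc i = V"
  proof (rule ex1I[of _ i0])
    show "i0 \<in> V \<and> Sc i0 = V" using Si0 i0(1) by simp
    fix i assume "i \<in> V \<and> Sc i = V"
    then show "i = i0" using ne by blast
  qed
  show "inj_on Sc V" using S_inj by (auto simp: inj_on_def)
  show "maximal_nested_set V B (Sc ` V - {V})"
    unfolding maximal_nested_set_def
  proof (intro conjI allI impI)
    show "nested_set V B (Sc ` V - {V})" using nestedN unfolding N_def .
    fix N' assume h: "nested_set V B N'" "Sc ` V - {V} \<subseteq> N'"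
    have "N' \<subseteq> N" using maxN[of N'] h unfolding N_def by blast
    then show "N' = Sc ` V - {V}" using h(2) unfolding N_def by blast
  qed
qed

end

theorem mainTheorem3:
  fixes n k :: nat and B :: "nat set set" and I :: "nat \<Rightarrow> nat set"
  assumes "connected_bs {1..n} B"
    and "splitting_chain {1..n} B k I"
  shows "(\<exists>!i. i \<in> {1..n} \<and> chain_S B k I i = {1..n})
    \<and> inj_on (chain_S B k I) {1..n}
    \<and> maximal_nested_set {1..n} B (chain_S B k I ` {1..n} - {{1..n}})"
proof -
  interpret SC "{1..n}" B k I
    using assms unfolding connected_bs_def by unfold_locales auto
  show ?thesis by (rule result)
qed

end
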